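(* Let $\mathbf d=(d_1,\ldots,d_n)$ be a degree sequence with $n\ge2$ and let $v\in[n]$. Then for every $1\le k\le n-1$, \[\mathbb P(\mathfrak s_n(v)>k)=\frac{1}{\langle n\rangle_k}\sum_{(i_1,\ldots,i_k)\in J_{n,k}(v)}\ \prod_{j=1}^k d_{i_j},\] where $\langle n\rangle_k=n!/(n-k)!$ and $J_{n,k}(v)=\{(j_1,\ldots,j_k)\in([n]\setminus\{v\})^k: j_\ell\ne j_m\text{ for }\ell\ne m\}$.
   Context: A degree sequence is $\mathbf d=(d_1,\ldots,d_n)\in\mathbb N_0^n$ with $\sum_j d_j=n$. Let $\mathfrak F(\mathbf d)=\{f:[n]\to[n]: |f^{-1}(\{i\})|=d_i\ \forall i\}$ and let $F$ be uniform on $\mathfrak F(\mathbf d)$. For $f:V\to V$, $v\in V$, the six-length is $\mathfrak s_f(v)=\min\{k\in\mathbb N: f^{(k)}(v)\in\{f^{(j)}(v):0\le j\le k-1\}\}$ ($f^{(k)}$ the $k$-fold composition, $f^{(0)}=\mathrm{id}$); $\mathfrak s_n(v)=\mathfrak s_F(v)$. *)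

theory Defs
  imports "HOL-Probability.Probability"
begin

text \<open>Vertex set [n] = {1..n}. A degree sequence is d :: nat => nat with
  sum over {1..n} equal to n (values outside {1..n} are irrelevant).\<close>

definition degree_seq :: "nat \<Rightarrow> (nat \<Rightarrow> nat) \<Rightarrow> bool" where
  "degree_seq n d \<longleftrightarrow> (\<Sum>i\<in>{1..n}. d i) = n"

definition maps_deg :: "nat \<Rightarrow> (nat \<Rightarrow> nat) \<Rightarrow> (nat \<Rightarrow> nat) set" where
  "maps_deg n d = {f \<in> {1..n} \<rightarrow>\<^sub>E {1..n}. \<forall>i\<in>{1..n}. card {j\<in>{1..n}. f j = i} = d i}"

definition six_length :: "('a \<Rightarrow> 'a) \<Rightarrow> 'a \<Rightarrow> nat" where
  "six_length f v = (LEAST k. k \<ge> 1 \<and> (f ^^ k) v \<in> {(f ^^ j) v | j. j \<le> k - 1})"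

definition J_tuples :: "nat \<Rightarrow> nat \<Rightarrow> nat \<Rightarrow> nat list set" where
  "J_tuples n k v = {xs. length xs = k \<and> set xs \<subseteq> {1..n} - {v} \<and> distinct xs}"

end

theory Submission
  imports Defs
begin

definition sw :: "nat \<Rightarrow> nat \<Rightarrow> nat \<Rightarrow> nat" where
  "sw a b z = (if z = a then b else if z = b then a else z)"

lemma sw_sw[simp]: "sw a b (sw a b z) = z"
  by (auto simp: sw_def)

definition SS :: "nat \<Rightarrow> (nat \<Rightarrow> nat) \<Rightarrow> nat list \<Rightarrow> nat list \<Rightarrow> (nat \<Rightarrow> nat) set" where
  "SS n d X Y = {f \<in> maps_deg n d. \<forall>j<length X. f (X ! j) = Y ! j}"

lemma finite_maps: "finite (maps_deg n d)"
proof -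
  have "maps_deg n d \<subseteq> {1..n} \<rightarrow>\<^sub>E {1..n}" by (auto simp: maps_deg_def)
  thus ?thesis by (rule finite_subset) (simp add: finite_PiE)
qed

lemma finite_SS: "finite (SS n d X Y)"
  using finite_maps by (rule finite_subset[rotated]) (auto simp: SS_def)

lemma maps_in: "f \<in> maps_deg n d \<Longrightarrow> z \<in> {1..n} \<Longrightarrow> f z \<in> {1..n}"
  by (auto simp: maps_deg_def PiE_def Pi_def)

lemma maps_fiber: "f \<in> maps_deg n d \<Longrightarrow> i \<in> {1..n} \<Longrightarrow> card {j\<in>{1..n}. f j = i} = d i"
  by (auto simp: maps_deg_def)

lemma swap_in:
  assumes f: "f \<in> maps_deg n d" and a: "a \<in> {1..n}" and b: "b \<in> {1..n}"
  shows "f \<circ> sw a b \<in> maps_deg n d"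
proof -
  have pe: "f \<in> {1..n} \<rightarrow>\<^sub>E {1..n}" using f by (auto simp: maps_deg_def)
  have "f \<circ> sw a b \<in> {1..n} \<rightarrow>\<^sub>E {1..n}"
    using pe a b by (auto simp: PiE_def Pi_def extensional_def sw_def)
  moreover have "card {j\<in>{1..n}. (f \<circ> sw a b) j = i} = d i" if i: "i \<in> {1..n}" for i
  proof -
    have "{j\<in>{1..n}. (f \<circ> sw a b) j = i} = sw a b ` {j\<in>{1..n}. f j = i}"
    proof (rule set_eqI, rule iffI)
      fix z assume "z \<in> {j\<in>{1..n}. (f \<circ> sw a b) j = i}"
      then show "z \<in> sw a b ` {j\<in>{1..n}. f j = i}"
        using a b by (intro image_eqI[of _ _ "sw a b z"]) (auto simp: sw_def)
    next
      fix z assume "z \<in> sw a b ` {j\<in>{1..n}. f j = i}"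
      then show "z \<in> {j\<in>{1..n}. (f \<circ> sw a b) j = i}"
        using a b by (auto simp: sw_def)
    qed
    moreover have "inj (sw a b)" by (metis injI sw_sw)
    ultimately show ?thesis using maps_fiber[OF f i] by (simp add: card_image inj_on_subset)
  qed
  ultimately show ?thesis by (auto simp: maps_deg_def)
qed

lemma T_le:
  assumes a: "a \<in> {1..n}" and b: "b \<in> {1..n}" and "a \<notin> set X" "b \<notin> set X"
  shows "card {f\<in>SS n d X Y. f a = y} \<le> card {f\<in>SS n d X Y. f b = y}"
proof (rule card_inj_on_le[of "\<lambda>f. f \<circ> sw a b"])
  show "inj_on (\<lambda>f. f \<circ> sw a b) {f\<in>SS n d X Y. f a = y}"
  proof (rule inj_onI)
    fix f g assume "f \<circ> sw a b = g \<circ> sw a b"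
    then have "\<And>z. f (sw a b (sw a b z)) = g (sw a b (sw a b z))" by (metis comp_apply)
    then show "f = g" by auto
  qed
  show "(\<lambda>f. f \<circ> sw a b) ` {f\<in>SS n d X Y. f a = y} \<subseteq> {f\<in>SS n d X Y. f b = y}"
  proof
    fix h assume "h \<in> (\<lambda>f. f \<circ> sw a b) ` {f\<in>SS n d X Y. f a = y}"
    then obtain f where f: "f \<in> SS n d X Y" "f a = y" and h: "h = f \<circ> sw a b" by blast
    have "h \<in> maps_deg n d" using f swap_in a b h by (auto simp: SS_def)
    moreover have "\<forall>j<length X. h (X ! j) = Y ! j"
    proof (intro allI impI)
      fix j assume j: "j < length X"
      then have "X ! j \<noteq> a" "X ! j \<noteq> b" using assms nth_mem by metis+
      then show "h (X ! j) = Y ! j" using f j h by (auto simp: SS_def sw_def)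
    qed
    moreover have "h b = y" using h f by (auto simp: sw_def)
    ultimately show "h \<in> {f\<in>SS n d X Y. f b = y}" by (auto simp: SS_def)
  qed
  show "finite {f\<in>SS n d X Y. f b = y}" using finite_SS by auto
qed

lemma count_step:
  assumes dX: "distinct (X@[x])" and sX: "set (X@[x]) \<subseteq> {1..n}"
    and dY: "distinct (Y@[y])" and sY: "set (Y@[y]) \<subseteq> {1..n}" and len: "length X = length Y"
  shows "card (SS n d (X@[x]) (Y@[y])) * (n - length X) = card (SS n d X Y) * d y"
proof -
  define R where "R = {1..n} - set X"
  define T where "T z = {f\<in>SS n d X Y. f z = y}" for z
  have 1: "SS n d (X@[x]) (Y@[y]) = T x"
  proof -
    have "(\<forall>j<length (X@[x]). f ((X@[x]) ! j) = (Y@[y]) ! j) \<longleftrightarrow>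
          (\<forall>j<length X. f (X ! j) = Y ! j) \<and> f x = y" for f :: "nat \<Rightarrow> nat"
      using len by (auto simp: nth_append less_Suc_eq)
    then show ?thesis by (auto simp: SS_def T_def)
  qed
  have xR: "x \<in> R" using dX sX by (auto simp: R_def)
  have 2: "card (T z) = card (T x)" if z: "z \<in> R" for z
    using T_le[of z n x X d Y y] T_le[of x n z X d Y y] xR z unfolding R_def T_def by auto
  have finR: "finite R" by (simp add: R_def)
  have 3: "(\<Sum>z\<in>R. card (T z)) = (\<Sum>f\<in>SS n d X Y. card {z\<in>R. f z = y})"
  proof -
    have "(\<Sum>z\<in>R. card (T z)) = (\<Sum>z\<in>R. \<Sum>f\<in>SS n d X Y. if f z = y then 1 else 0)"
      unfolding T_def by (simp add: sum.inter_filter[symmetric] finite_SS)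
    also have "\<dots> = (\<Sum>f\<in>SS n d X Y. \<Sum>z\<in>R. if f z = y then 1 else 0)"
      by (rule sum.swap)
    also have "\<dots> = (\<Sum>f\<in>SS n d X Y. card {z\<in>R. f z = y})"
      using finR by (simp add: sum.inter_filter[symmetric])
    finally show ?thesis .
  qed
  have yn: "y \<in> {1..n}" using sY by auto
  have 4: "card {z\<in>R. f z = y} = d y" if f: "f \<in> SS n d X Y" for f
  proof -
    have "{z\<in>R. f z = y} = {z\<in>{1..n}. f z = y}"
    proof -
      have "f z \<noteq> y" if "z \<in> set X" for z
      proof -
        obtain j where j: "j < length X" "z = X ! j" using \<open>z \<in> set X\<close> by (metis in_set_conv_nth)
        then have "f z = Y ! j" using f by (auto simp: SS_def)
        moreover have "Y ! j \<in> set Y" using j len by auto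
        ultimately show ?thesis using dY by auto
      qed
      then show ?thesis by (auto simp: R_def)
    qed
    then show ?thesis using maps_fiber[of f n d y] f yn by (auto simp: SS_def)
  qed
  have cR: "card R = n - length X"
    using sX dX by (simp add: R_def card_Diff_subset distinct_card)
  have "card R * card (T x) = card (SS n d X Y) * d y"
    using 2 3 4 by simp
  then show ?thesis using 1 cR by (simp add: mult.commute)
qed

lemma count_prefix:
  assumes dX: "distinct Xs" and sX: "set Xs \<subseteq> {1..n}"
    and dY: "distinct Ys" and sY: "set Ys \<subseteq> {1..n}" and len: "length Xs = length Ys"
  shows "m \<le> length Xs \<Longrightarrow> card (SS n d (take m Xs) (take m Ys)) * (\<Prod>j<m. n - j)
        = card (maps_deg n d) * (\<Prod>j<m. d (Ys ! j))"
proof (induction m)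
  case 0
  then show ?case by (simp add: SS_def)
next
  case (Suc m)
  have m: "m < length Xs" using Suc by auto
  have tX: "take (Suc m) Xs = take m Xs @ [Xs ! m]" using m by (simp add: take_Suc_conv_app_nth)
  have tY: "take (Suc m) Ys = take m Ys @ [Ys ! m]" using m len by (simp add: take_Suc_conv_app_nth)
  have st: "card (SS n d (take m Xs @ [Xs ! m]) (take m Ys @ [Ys ! m])) * (n - length (take m Xs))
     = card (SS n d (take m Xs) (take m Ys)) * d (Ys ! m)"
  proof (rule count_step)
    show "distinct (take m Xs @ [Xs ! m])" using dX by (metis tX distinct_take)
    show "set (take m Xs @ [Xs ! m]) \<subseteq> {1..n}" using sX by (metis tX set_take_subset subset_trans)
    show "distinct (take m Ys @ [Ys ! m])" using dY by (metis tY distinct_take)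
    show "set (take m Ys @ [Ys ! m]) \<subseteq> {1..n}" using sY by (metis tY set_take_subset subset_trans)
    show "length (take m Xs) = length (take m Ys)" using len by simp
  qed
  have lm: "length (take m Xs) = m" using m by simp
  have "card (SS n d (take (Suc m) Xs) (take (Suc m) Ys)) * (\<Prod>j<Suc m. n - j)
      = (card (SS n d (take m Xs @ [Xs ! m]) (take m Ys @ [Ys ! m])) * (n - m)) * (\<Prod>j<m. n - j)"
    by (simp add: tX tY mult_ac)
  also have "\<dots> = card (SS n d (take m Xs) (take m Ys)) * (\<Prod>j<m. n - j) * d (Ys ! m)"
    using st lm by (simp add: mult_ac)
  also have "\<dots> = card (maps_deg n d) * (\<Prod>j<Suc m. d (Ys ! j))"
    using Suc m by (simp add: mult_ac)
  finally show ?case .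
qed

lemma maps_exist:
  assumes "finite B"
  shows "finite A \<Longrightarrow> (\<Sum>i\<in>B. d i) = card A \<Longrightarrow>
     \<exists>f \<in> A \<rightarrow>\<^sub>E B. \<forall>i\<in>B. card {j\<in>A. f j = i} = d i"
  using assms
proof (induction B arbitrary: A rule: finite_induct)
  case empty
  then have "A = {}" by simp
  then show ?case by (intro bexI[of _ "\<lambda>_. undefined"]) auto
next
  case (insert b B)
  have "d b \<le> card A" using insert by simp
  then obtain C where C: "C \<subseteq> A" "card C = d b" "finite C" by (rule obtain_subset_with_card_n)
  have "card (A - C) = (\<Sum>i\<in>B. d i)" using insert C by (simp add: card_Diff_subset)
  then obtain g where g: "g \<in> (A - C) \<rightarrow>\<^sub>E B" "\<forall>i\<in>B. card {j\<in>A - C. g j = i} = d i"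
    using insert.IH[of "A - C"] insert.prems by auto
  define f where "f x = (if x \<in> C then b else g x)" for x
  have "f \<in> A \<rightarrow>\<^sub>E insert b B" using g C by (auto simp: f_def PiE_def Pi_def extensional_def)
  moreover have "card {j\<in>A. f j = i} = d i" if i: "i \<in> insert b B" for i
  proof (cases "i = b")
    case True
    have "{j\<in>A. f j = i} = C" using g C True insert.hyps by (auto simp: f_def PiE_def Pi_def)
    then show ?thesis using C True by simp
  next
    case False
    then have "{j\<in>A. f j = i} = {j\<in>A - C. g j = i}" by (auto simp: f_def)
    then show ?thesis using g False i by auto
  qed
  ultimately show ?case by blast
qed

lemma maps_nonempty: "degree_seq n d \<Longrightarrow> maps_deg n d \<noteq> {}"
  using maps_exist[of "{1..n}" "{1..n}" d] by (auto simp: degree_seq_def maps_deg_def)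


lemma orbit_in: "f \<in> maps_deg n d \<Longrightarrow> v \<in> {1..n} \<Longrightarrow> (f^^j) v \<in> {1..n}"
proof (induction j)
  case 0 then show ?case by simp
next
  case (Suc j)
  then have "(f^^j) v \<in> {1..n}" by simp
  then show ?case using maps_in[OF Suc.prems(1)] by simp
qed

lemma six_gt:
  assumes f: "f \<in> maps_deg n d" and v: "v \<in> {1..n}"
  shows "k < six_length f v \<longleftrightarrow> inj_on (\<lambda>j. (f^^j) v) {0..k}"
proof -
  define g where "g = (\<lambda>j. (f^^j) v)"
  define P where "P m = (m \<ge> 1 \<and> g m \<in> {g j | j. j \<le> m - 1})" for m
  have sl: "six_length f v = (LEAST m. P m)" by (simp add: six_length_def P_def g_def)
  have ex: "\<exists>m. P m"
  proof -
    have "\<not> inj_on g {0..n}"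
    proof
      assume "inj_on g {0..n}"
      moreover have "g ` {0..n} \<subseteq> {1..n}" using orbit_in[OF f v] by (auto simp: g_def)
      ultimately have "card {0..n} \<le> card {1..n}" by (intro card_inj_on_le) auto
      then show False by simp
    qed
    then obtain i j where ij: "i \<in> {0..n}" "j \<in> {0..n}" "i \<noteq> j" "g i = g j"
      by (auto simp: inj_on_def)
    show ?thesis
    proof (cases "i < j")
      case True
      then have "P j" using ij by (auto simp: P_def intro!: exI[of _ i])
      then show ?thesis by blast
    next
      case False
      then have "P i" using ij by (auto simp: P_def intro!: exI[of _ j])
      then show ?thesis by blast
    qed
  qed
  have 1: "k < (LEAST m. P m) \<longleftrightarrow> \<not> (\<exists>m. P m \<and> m \<le> k)"
  proof
    assume "k < (LEAST m. P m)"
    then show "\<not> (\<exists>m. P m \<and> m \<le> k)" using Least_le[of P] by (meson le_trans not_le)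
  next
    assume "\<not> (\<exists>m. P m \<and> m \<le> k)"
    then show "k < (LEAST m. P m)" using LeastI_ex[OF ex] by (meson not_le)
  qed
  have 2: "(\<not> (\<exists>m. P m \<and> m \<le> k)) \<longleftrightarrow> inj_on g {0..k}"
  proof
    assume h: "\<not> (\<exists>m. P m \<and> m \<le> k)"
    show "inj_on g {0..k}"
    proof (rule inj_onI, rule ccontr)
      fix a b assume ab: "a \<in> {0..k}" "b \<in> {0..k}" "g a = g b" "a \<noteq> b"
      show False
      proof (cases "a < b")
        case True
        then have "P b" using ab by (auto simp: P_def intro!: exI[of _ a])
        then show False using h ab by auto
      next
        case False
        then have "P a" using ab by (auto simp: P_def intro!: exI[of _ b])
        then show False using h ab by auto
      qed
    qed
  next
    assume inj: "inj_on g {0..k}"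
    show "\<not> (\<exists>m. P m \<and> m \<le> k)"
    proof
      assume "\<exists>m. P m \<and> m \<le> k"
      then obtain m j where mj: "m \<ge> 1" "m \<le> k" "j \<le> m - 1" "g m = g j" by (auto simp: P_def)
      have "j < m" using mj by arith
      then have "j \<in> {0..k}" "m \<in> {0..k}" using mj by auto
      then have "m = j" using inj_onD[OF inj mj(4)] by blast
      then show False using \<open>j < m\<close> by simp
    qed
  qed
  show ?thesis using 1 2 sl by (simp add: g_def)
qed

lemma inj_iff_J:
  assumes f: "f \<in> maps_deg n d" and v: "v \<in> {1..n}"
  shows "inj_on (\<lambda>j. (f^^j) v) {0..k} \<longleftrightarrow> map (\<lambda>j. (f^^Suc j) v) [0..<k] \<in> J_tuples n k v"
proof -
  define g where "g = (\<lambda>j. (f^^j) v)"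
  have "inj_on g {0..k} \<longleftrightarrow> distinct (map g [0..<Suc k])"
    by (simp add: distinct_map atLeastLessThanSuc_atLeastAtMost del: upt_Suc)
  also have "map g [0..<Suc k] = v # map (\<lambda>j. g (Suc j)) [0..<k]"
    by (simp add: g_def upt_conv_Cons map_Suc_upt[symmetric] del: upt_Suc)
  finally have e: "inj_on g {0..k} \<longleftrightarrow> v \<notin> set (map (\<lambda>j. g (Suc j)) [0..<k]) \<and> distinct (map (\<lambda>j. g (Suc j)) [0..<k])"
    by simp
  have "set (map (\<lambda>j. g (Suc j)) [0..<k]) \<subseteq> {1..n}"
    using orbit_in[OF f v] unfolding g_def by (auto simp del: funpow.simps)
  then show ?thesis using e unfolding g_def J_tuples_def by (auto simp del: funpow.simps) (metis atLeastLessThan_iff image_eqI le0)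
qed

lemma path_iff:
  assumes len: "length xs = k" and k: "1 \<le> k"
  shows "(\<forall>j<k. f ((v # butlast xs) ! j) = xs ! j) \<longleftrightarrow> (\<forall>j<k. (f^^Suc j) v = xs ! j)"
proof
  assume h: "\<forall>j<k. f ((v # butlast xs) ! j) = xs ! j"
  show "\<forall>j<k. (f^^Suc j) v = xs ! j"
  proof (intro allI impI)
    fix j assume "j < k"
    then show "(f^^Suc j) v = xs ! j"
    proof (induction j)
      case 0
      then show ?case using h by auto
    next
      case (Suc j)
      have "(v # butlast xs) ! Suc j = xs ! j" using Suc.prems len by (simp add: nth_butlast)
      then show ?case using Suc h by (metis Suc_lessD funpow.simps(2) o_apply)
    qed
  qed
next
  assume h: "\<forall>j<k. (f^^Suc j) v = xs ! j"
  show "\<forall>j<k. f ((v # butlast xs) ! j) = xs ! j"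
  proof (intro allI impI)
    fix j assume j: "j < k"
    show "f ((v # butlast xs) ! j) = xs ! j"
    proof (cases j)
      case 0
      then show ?thesis using h j by auto
    next
      case (Suc i)
      have "(v # butlast xs) ! j = xs ! i" using Suc j len by (simp add: nth_butlast)
      then show ?thesis using h j Suc by (metis Suc_lessD funpow.simps(2) o_apply)
    qed
  qed
qed

lemma fact_prod: "k \<le> n \<Longrightarrow> fact n = fact (n - k) * (\<Prod>j<k. n - j)"
proof (induction k)
  case 0 then show ?case by simp
next
  case (Suc k)
  have "n - k = Suc (n - Suc k)" using Suc.prems by simp
  then have "fact (n - k) = (n - k) * fact (n - Suc k)" by (metis fact_Suc of_nat_id)
  then show ?case using Suc by (simp add: mult_ac)
qed

theorem lemma3p2:
  fixes n k v :: nat and d :: "nat \<Rightarrow> nat"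
  assumes "degree_seq n d" and "n \<ge> 2" and "v \<in> {1..n}"
    and "1 \<le> k" and "k \<le> n - 1"
  shows "measure_pmf.prob (pmf_of_set (maps_deg n d)) {f. six_length f v > k}
       = (1 / (fact n / fact (n - k))) *
         (\<Sum>xs\<in>J_tuples n k v. \<Prod>j<k. real (d (xs ! j)))"
proof -
  define M where "M = maps_deg n d"
  define J where "J = J_tuples n k v"
  define E where "E xs = SS n d (v # butlast xs) xs" for xs
  define L where "L f = map (\<lambda>j. (f^^Suc j) v) [0..<k]" for f :: "nat \<Rightarrow> nat"
  define P where "P = (\<Prod>j<k. n - j)"
  have ne: "M \<noteq> {}" using maps_nonempty assms(1) by (simp add: M_def)
  have fin: "finite M" using finite_maps by (simp add: M_def)
  have finJ: "finite J"
  proof -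
    have "J \<subseteq> {xs. set xs \<subseteq> {1..n} \<and> length xs = k}" by (auto simp: J_def J_tuples_def)
    then show ?thesis by (rule finite_subset) (simp add: finite_lists_length_eq)
  qed
  have Ef: "f \<in> E xs \<longleftrightarrow> f \<in> M \<and> L f = xs" if xs: "xs \<in> J" for f xs
  proof -
    have len: "length xs = k" using xs by (simp add: J_def J_tuples_def)
    have l2: "length (v # butlast xs) = k" using len assms(4) by simp
    have "L f = xs \<longleftrightarrow> (\<forall>j<k. (f^^Suc j) v = xs ! j)"
      using len by (auto simp: L_def list_eq_iff_nth_eq)
    then show ?thesis using path_iff[OF len assms(4), of f v] l2
      by (auto simp: E_def SS_def M_def)
  qed
  have six: "f \<in> M \<and> k < six_length f v \<longleftrightarrow> f \<in> M \<and> L f \<in> J" for f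
  proof (cases "f \<in> M")
    case True
    have "k < six_length f v \<longleftrightarrow> inj_on (\<lambda>j. (f^^j) v) {0..k}"
      using six_gt[of f n d v k] True assms(3) by (simp add: M_def)
    also have "\<dots> \<longleftrightarrow> L f \<in> J"
      using inj_iff_J[of f n d v k] True assms(3) by (simp add: M_def J_def L_def)
    finally show ?thesis using True by simp
  qed simp
  have U: "M \<inter> {f. six_length f v > k} = (\<Union>xs\<in>J. E xs)"
  proof (rule set_eqI)
    fix f
    show "f \<in> M \<inter> {f. six_length f v > k} \<longleftrightarrow> f \<in> (\<Union>xs\<in>J. E xs)"
    proof
      assume "f \<in> M \<inter> {f. six_length f v > k}"
      then have "f \<in> M" "L f \<in> J" using six by auto
      then have "f \<in> E (L f)" using Ef by blast
      then show "f \<in> (\<Union>xs\<in>J. E xs)" using \<open>L f \<in> J\<close> by blast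
    next
      assume "f \<in> (\<Union>xs\<in>J. E xs)"
      then obtain xs where "xs \<in> J" "f \<in> E xs" by blast
      then have "f \<in> M" "L f \<in> J" using Ef by auto
      then show "f \<in> M \<inter> {f. six_length f v > k}" using six by auto
    qed
  qed
  have cU: "card (\<Union>xs\<in>J. E xs) = (\<Sum>xs\<in>J. card (E xs))"
  proof (rule card_UN_disjoint[OF finJ])
    show "\<forall>i\<in>J. finite (E i)" by (simp add: E_def finite_SS)
    show "\<forall>i\<in>J. \<forall>j\<in>J. i \<noteq> j \<longrightarrow> E i \<inter> E j = {}"
    proof (intro ballI impI)
      fix i j assume ij: "i \<in> J" "j \<in> J" "i \<noteq> j"
      show "E i \<inter> E j = {}"
      proof (rule ccontr)
        assume "E i \<inter> E j \<noteq> {}"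
        then obtain f where "f \<in> E i" "f \<in> E j" by blast
        then have "L f = i" "L f = j" using Ef ij by auto
        then show False using ij by simp
      qed
    qed
  qed
  have cE: "real (card (E xs)) * real P = real (card M) * (\<Prod>j<k. real (d (xs ! j)))"
    if xs: "xs \<in> J" for xs
  proof -
    have len: "length xs = k" and dx: "distinct xs" and sx: "set xs \<subseteq> {1..n} - {v}"
      using xs by (auto simp: J_def J_tuples_def)
    have "card (SS n d (take k (v # butlast xs)) (take k xs)) * (\<Prod>j<k. n - j)
        = card (maps_deg n d) * (\<Prod>j<k. d (xs ! j))"
    proof (rule count_prefix)
      show "distinct (v # butlast xs)" using dx sx in_set_butlastD by (fastforce simp: distinct_butlast)
      show "set (v # butlast xs) \<subseteq> {1..n}" using sx assms(3) in_set_butlastD by fastforce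
      show "distinct xs" by fact
      show "set xs \<subseteq> {1..n}" using sx by auto
      show "length (v # butlast xs) = length xs" using len assms(4) by simp
      show "k \<le> length (v # butlast xs)" using len assms(4) by simp
    qed
    moreover have "take k (v # butlast xs) = v # butlast xs" "take k xs = xs"
      using len assms(4) by auto
    ultimately have "card (E xs) * P = card M * (\<Prod>j<k. d (xs ! j))"
      by (simp add: E_def M_def P_def)
    then have "real (card (E xs) * P) = real (card M * (\<Prod>j<k. d (xs ! j)))" by simp
    then show ?thesis by simp
  qed
  have "P > 0" unfolding P_def using assms(5) by (intro prod_pos) auto
  then have Ppos: "real P > 0" by simp
  have fP: "fact n / fact (n - k) = real P"
  proof -
    have kn: "k \<le> n" using assms(5) by simp
    have e: "fact n = fact (n - k) * P" using fact_prod[OF kn] unfolding P_def .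
    have "fact n = (fact (n - k) :: real) * real P"
      using e by (metis of_nat_fact of_nat_mult)
    then show ?thesis by simp
  qed
  have cM: "real (card M) > 0" using ne fin by (simp add: card_gt_0_iff)
  have "measure_pmf.prob (pmf_of_set M) {f. six_length f v > k}
        = real (card (M \<inter> {f. six_length f v > k})) / real (card M)"
    by (rule measure_pmf_of_set[OF ne fin])
  also have "\<dots> = (\<Sum>xs\<in>J. real (card (E xs))) / real (card M)"
    using U cU by simp
  also have "(\<Sum>xs\<in>J. real (card (E xs))) = (\<Sum>xs\<in>J. (real (card M) / real P) * (\<Prod>j<k. real (d (xs ! j))))"
  proof (rule sum.cong[OF refl])
    fix xs assume xs: "xs \<in> J"
    show "real (card (E xs)) = (real (card M) / real P) * (\<Prod>j<k. real (d (xs ! j)))"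
      using cE[OF xs] Ppos by (simp add: eq_divide_eq)
  qed
  also have "\<dots> = (real (card M) / real P) * (\<Sum>xs\<in>J. \<Prod>j<k. real (d (xs ! j)))"
    by (rule sum_distrib_left[symmetric])
  also have "(real (card M) / real P) * (\<Sum>xs\<in>J. \<Prod>j<k. real (d (xs ! j))) / real (card M)
      = (1 / real P) * (\<Sum>xs\<in>J. \<Prod>j<k. real (d (xs ! j)))"
    using cM by simp
  finally show ?thesis using fP by (simp add: M_def J_def)
qed

end
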